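(* Let $n\ge2$, $k\ge1$. For all $f\in P_{n,k}$ and all positive integers $l$, \[ \|f\|_\infty\le\binom{n+kl-1}{kl}^{\frac1{2l}}\|f\|_{2l}. \]
   Context: $P_{n,k}$: real forms of degree $k$ in $n$ variables; $\sigma$: rotation-invariant probability measure on $S^{n-1}$; $\|f\|_p=(\int_{S^{n-1}}|f|^p\,d\sigma)^{1/p}$ and $\|f\|_\infty=\max_{x\in S^{n-1}}|f(x)|$. *)

theory Defs
  imports "HOL-Probability.Probability"
begin

definition is_form :: "nat \<Rightarrow> (real^'n \<Rightarrow> real) \<Rightarrow> bool" where
  "is_form k f \<longleftrightarrow> (\<exists>c :: ('n \<Rightarrow> nat) \<Rightarrow> real.
     f = (\<lambda>x. \<Sum>\<alpha>\<in>{\<alpha>. (\<Sum>i\<in>UNIV. \<alpha> i) = k}. c \<alpha> * (\<Prod>i\<in>UNIV. (x $ i) ^ (\<alpha> i))))"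

definition rot_inv_sphere_prob :: "(real^'n) measure \<Rightarrow> bool" where
  "rot_inv_sphere_prob \<sigma> \<longleftrightarrow>
     prob_space \<sigma> \<and> space \<sigma> = sphere 0 1 \<and>
     sets \<sigma> = sets (restrict_space borel (sphere (0::real^'n) 1)) \<and>
     (\<forall>T. orthogonal_transformation T \<and> det (matrix T) = 1 \<longrightarrow>
        (\<forall>A\<in>sets \<sigma>. emeasure \<sigma> (T -` A \<inter> space \<sigma>) = emeasure \<sigma> A))"

end

theory Submission
  imports Defs "HOL-Library.Multiset"
begin


definition mono_n :: "('n::finite \<Rightarrow> nat) \<Rightarrow> real^'n \<Rightarrow> real" where
  "mono_n \<alpha> x = (\<Prod>i\<in>UNIV. (x $ i) ^ (\<alpha> i))"

definition Aset :: "nat \<Rightarrow> ('n::finite \<Rightarrow> nat) set" where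
  "Aset k = {\<alpha>. (\<Sum>i\<in>UNIV. \<alpha> i) = k}"

lemma finite_Aset: "finite (Aset k :: ('n::finite \<Rightarrow> nat) set)"
proof -
  have "Aset k \<subseteq> PiE (UNIV::'n set) (\<lambda>_. {..k})"
  proof
    fix \<alpha> :: "'n \<Rightarrow> nat" assume "\<alpha> \<in> Aset k"
    then have "\<alpha> i \<le> k" for i unfolding Aset_def
      using member_le_sum[of i UNIV \<alpha>] by auto
    then show "\<alpha> \<in> PiE UNIV (\<lambda>_. {..k})" by auto
  qed
  moreover have "finite (PiE (UNIV::'n set) (\<lambda>_. {..k}))" by (intro finite_PiE) auto
  ultimately show ?thesis by (rule finite_subset)
qed

lemma is_form_alt: "is_form k f \<longleftrightarrow> (\<exists>c. f = (\<lambda>x. \<Sum>\<alpha>\<in>Aset k. c \<alpha> * mono_n \<alpha> x))"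
  unfolding is_form_def Aset_def mono_n_def by simp

lemma card_Aset: "card (Aset d :: ('n::finite \<Rightarrow> nat) set) = (CARD('n) + d - 1) choose d"
proof -
  have "bij_betw count (multisets_of_size (UNIV::'n set) d) (Aset d)"
  proof (rule bij_betwI')
    fix X Y :: "'n multiset" show "(count X = count Y) = (X = Y)"
      by (simp add: count_inject)
  next
    fix X :: "'n multiset" assume "X \<in> multisets_of_size UNIV d"
    then have "size X = d" by (simp add: multisets_of_size_def)
    moreover have "size X = (\<Sum>i\<in>UNIV. count X i)"
      unfolding size_multiset_overloaded_eq
      by (rule sum.mono_neutral_left) (auto simp: count_eq_zero_iff)
    ultimately show "count X \<in> Aset d" by (simp add: Aset_def)
  next
    fix \<alpha> :: "'n \<Rightarrow> nat" assume a: "\<alpha> \<in> Aset d"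
    have c: "count (Abs_multiset \<alpha>) = \<alpha>" by (rule Abs_multiset_inverse) simp
    have "size (Abs_multiset \<alpha>) = (\<Sum>i\<in>UNIV. count (Abs_multiset \<alpha>) i)"
      unfolding size_multiset_overloaded_eq
      by (rule sum.mono_neutral_left) (auto, metis c count_eq_zero_iff)
    then have "size (Abs_multiset \<alpha>) = d" using a c by (simp add: Aset_def)
    then show "\<exists>X\<in>multisets_of_size UNIV d. \<alpha> = count X"
      using c by (intro bexI[of _ "Abs_multiset \<alpha>"]) (auto simp: multisets_of_size_def)
  qed
  then have "card (Aset d :: ('n \<Rightarrow> nat) set) = card (multisets_of_size (UNIV::'n set) d)"
    by (simp add: bij_betw_same_card)
  also have "\<dots> = (CARD('n) + d - 1) choose d" by (rule card_multisets_of_size) simp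
  finally show ?thesis .
qed




lemma form_add: "is_form k f \<Longrightarrow> is_form k g \<Longrightarrow> is_form k (\<lambda>x. f x + g x)"
  unfolding is_form_alt
proof (elim exE)
  fix c d assume "f = (\<lambda>x. \<Sum>\<alpha>\<in>Aset k. c \<alpha> * mono_n \<alpha> x)" "g = (\<lambda>x. \<Sum>\<alpha>\<in>Aset k. d \<alpha> * mono_n \<alpha> x)"
  then show "\<exists>e. (\<lambda>x. f x + g x) = (\<lambda>x. \<Sum>\<alpha>\<in>Aset k. e \<alpha> * mono_n \<alpha> x)"
    by (intro exI[of _ "\<lambda>\<alpha>. c \<alpha> + d \<alpha>"]) (simp add: sum.distrib algebra_simps)
qed

lemma form_scale: "is_form k f \<Longrightarrow> is_form k (\<lambda>x. r * f x)"
  unfolding is_form_alt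
proof (elim exE)
  fix c assume "f = (\<lambda>x. \<Sum>\<alpha>\<in>Aset k. c \<alpha> * mono_n \<alpha> x)"
  then show "\<exists>e. (\<lambda>x. r * f x) = (\<lambda>x. \<Sum>\<alpha>\<in>Aset k. e \<alpha> * mono_n \<alpha> x)"
    by (intro exI[of _ "\<lambda>\<alpha>. r * c \<alpha>"]) (simp add: sum_distrib_left algebra_simps)
qed

lemma form_zero: "is_form k (\<lambda>x. 0)"
  unfolding is_form_alt by (intro exI[of _ "\<lambda>_. 0"]) simp

lemma form_sum: "finite I \<Longrightarrow> (\<And>i. i \<in> I \<Longrightarrow> is_form k (F i)) \<Longrightarrow> is_form k (\<lambda>x. \<Sum>i\<in>I. F i x)"
  by (induction I rule: finite_induct) (auto intro: form_add form_zero)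

lemma form_mono: assumes "\<alpha> \<in> Aset k" shows "is_form k (mono_n \<alpha>)"
  unfolding is_form_alt
proof (intro exI[of _ "\<lambda>\<beta>. if \<beta> = \<alpha> then 1 else 0"] ext)
  fix x
  have "(\<Sum>\<beta>\<in>Aset k. (if \<beta> = \<alpha> then 1 else 0) * mono_n \<beta> x) = (\<Sum>\<beta>\<in>Aset k. if \<beta> = \<alpha> then mono_n \<beta> x else 0)"
    by (intro sum.cong) auto
  also have "\<dots> = mono_n \<alpha> x" using assms by (simp add: sum.delta' finite_Aset)
  finally show "mono_n \<alpha> x = (\<Sum>\<beta>\<in>Aset k. (if \<beta> = \<alpha> then 1 else 0) * mono_n \<beta> x)" by simp
qed

lemma mono_add: "mono_n (\<lambda>i. \<alpha> i + \<beta> i) x = mono_n \<alpha> x * mono_n \<beta> x"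
  unfolding mono_n_def by (simp add: power_add prod.distrib)

lemma form_mult:
  fixes f g :: "real^'n::finite \<Rightarrow> real"
  assumes "is_form a f" "is_form b g"
  shows "is_form (a + b) (\<lambda>x. f x * g x)"
proof -
  obtain c where c: "f = (\<lambda>x. \<Sum>\<alpha>\<in>Aset a. c \<alpha> * mono_n \<alpha> x)" using assms(1) is_form_alt by blast
  obtain e where e: "g = (\<lambda>x. \<Sum>\<alpha>\<in>Aset b. e \<alpha> * mono_n \<alpha> x)" using assms(2) is_form_alt by blast
  define P where "P = (Aset a :: ('n \<Rightarrow> nat) set) \<times> (Aset b :: ('n \<Rightarrow> nat) set)"
  define s where "s = (\<lambda>p::('n\<Rightarrow>nat)\<times>('n\<Rightarrow>nat). (\<lambda>i. fst p i + snd p i))"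
  define C where "C = (\<lambda>\<gamma>. \<Sum>p\<in>{p \<in> P. s p = \<gamma>}. c (fst p) * e (snd p))"
  have fP: "finite P" unfolding P_def by (simp add: finite_Aset)
  have sP: "s ` P \<subseteq> Aset (a + b)"
    by (auto simp: P_def s_def Aset_def sum.distrib)
  have "f x * g x = (\<Sum>\<gamma>\<in>Aset (a+b). C \<gamma> * mono_n \<gamma> x)" for x
  proof -
    have "f x * g x = (\<Sum>p\<in>P. c (fst p) * e (snd p) * mono_n (s p) x)"
      unfolding c e P_def s_def
      by (simp add: sum_product sum.cartesian_product mono_add algebra_simps case_prod_beta)
    also have "\<dots> = (\<Sum>\<gamma>\<in>Aset (a+b). \<Sum>p\<in>{p \<in> P. s p = \<gamma>}. c (fst p) * e (snd p) * mono_n (s p) x)"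
      by (rule sum.group[symmetric]) (use fP sP finite_Aset in auto)
    also have "\<dots> = (\<Sum>\<gamma>\<in>Aset (a+b). C \<gamma> * mono_n \<gamma> x)"
      unfolding C_def sum_distrib_right by (intro sum.cong refl) auto
    finally show ?thesis .
  qed
  then show ?thesis unfolding is_form_alt by blast
qed

lemma form_one: "is_form 0 (\<lambda>x. 1)"
proof -
  have "(\<lambda>x. 1) = mono_n (\<lambda>_. 0::nat)" unfolding mono_n_def by auto
  moreover have "(\<lambda>_. 0::nat) \<in> (Aset 0 :: ('a::finite \<Rightarrow> nat) set)" by (simp add: Aset_def)
  ultimately show ?thesis using form_mono by metis
qed

lemma form_prod: "finite I \<Longrightarrow> (\<And>i. i \<in> I \<Longrightarrow> is_form (d i) (F i)) \<Longrightarrow> is_form (\<Sum>i\<in>I. d i) (\<lambda>x. \<Prod>i\<in>I. F i x)"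
  by (induction I rule: finite_induct) (auto intro: form_mult form_one)

lemma form_power: "is_form a f \<Longrightarrow> is_form (a * m) (\<lambda>x. f x ^ m)"
proof (induction m)
  case 0 then show ?case using form_one by simp
next
  case (Suc m)
  then have "is_form (a + a * m) (\<lambda>x. f x * f x ^ m)" by (intro form_mult) auto
  then show ?case by (simp add: algebra_simps)
qed

lemma form_coord: "is_form 1 (\<lambda>x::real^'n::finite. x $ j)"
proof -
  have "(\<lambda>x::real^'n. x $ j) = mono_n (\<lambda>i. if i = j then 1 else 0)"
    unfolding mono_n_def by (auto simp: if_distrib prod.delta cong: if_cong)
  moreover have "(\<lambda>i. if i = j then 1 else 0::nat) \<in> (Aset 1 :: ('n \<Rightarrow> nat) set)" by (simp add: Aset_def)
  ultimately show ?thesis using form_mono by metis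
qed

lemma form_linear: fixes T :: "real^'n::finite \<Rightarrow> real^'m::finite" assumes "linear T" shows "is_form 1 (\<lambda>x. T x $ i)"
proof -
  have "T x $ i = (\<Sum>j\<in>UNIV. matrix T $ i $ j * x $ j)" for x
    proof -
    have "T x = matrix T *v x" using matrix_works[of T x] assms linear_matrix_vector_mul_eq by simp
    then show ?thesis by (simp add: matrix_vector_mult_def)
  qed
  moreover have "is_form 1 (\<lambda>x::real^'n. \<Sum>j\<in>UNIV. matrix T $ i $ j * x $ j)"
    by (intro form_sum form_scale form_coord) auto
  ultimately show ?thesis by simp
qed

lemma form_comp:
  fixes T :: "real^'n::finite \<Rightarrow> real^'m::finite"
  assumes "is_form k h" "linear T"
  shows "is_form k (\<lambda>x. h (T x))"
proof -
  obtain c where c: "h = (\<lambda>x. \<Sum>\<alpha>\<in>Aset k. c \<alpha> * mono_n \<alpha> x)" using assms(1) is_form_alt by blast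
  have "is_form k (\<lambda>x. \<Sum>\<alpha>\<in>Aset k. c \<alpha> * mono_n \<alpha> (T x))"
  proof (intro form_sum form_scale)
    fix \<alpha> :: "'m \<Rightarrow> nat" assume a: "\<alpha> \<in> Aset k"
    have "is_form (\<Sum>i\<in>UNIV. 1 * \<alpha> i) (\<lambda>x. \<Prod>i\<in>UNIV. (T x $ i) ^ \<alpha> i)"
      by (intro form_prod form_power form_linear assms(2)) auto
    then show "is_form k (\<lambda>x. mono_n \<alpha> (T x))" using a by (simp add: Aset_def mono_n_def)
  qed (simp add: finite_Aset)
  then show ?thesis using c by simp
qed

lemma form_continuous: "is_form k h \<Longrightarrow> continuous_on S h"
  unfolding is_form_alt mono_n_def by (elim exE) (simp, intro continuous_intros)




definition rot :: "(real^'n \<Rightarrow> real^'n) \<Rightarrow> bool" where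
  "rot R \<longleftrightarrow> orthogonal_transformation R \<and> det (matrix R) = 1"

locale rsp =
  fixes \<sigma> :: "(real^'n::finite) measure"
  assumes rip: "rot_inv_sphere_prob \<sigma>"
begin

abbreviation "S \<equiv> sphere (0::real^'n) 1"

lemma ps: "prob_space \<sigma>" and spS: "space \<sigma> = S"
  and setsS: "sets \<sigma> = sets (restrict_space borel S)"
  and inv: "rot T \<Longrightarrow> A \<in> sets \<sigma> \<Longrightarrow> emeasure \<sigma> (T -` A \<inter> space \<sigma>) = emeasure \<sigma> A"
  using rip unfolding rot_inv_sphere_prob_def rot_def by auto

lemma meas: fixes h :: "real^'n \<Rightarrow> real" shows "continuous_on S h \<Longrightarrow> h \<in> borel_measurable \<sigma>"
  using measurable_cong_sets[OF setsS refl] borel_measurable_continuous_on_restrict by blast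

lemma integ: fixes h :: "real^'n \<Rightarrow> real" assumes "continuous_on S h" shows "integrable \<sigma> h"
proof -
  have "compact (h ` S)" by (rule compact_continuous_image[OF assms]) simp
  then obtain B where B: "\<forall>y\<in>h ` S. norm y \<le> B" using compact_imp_bounded bounded_iff by metis
  interpret prob_space \<sigma> by (rule ps)
  show ?thesis
    by (rule integrable_const_bound[of h B]) (use B spS meas[OF assms] in auto)
qed

lemma rot_S: "rot R \<Longrightarrow> x \<in> S \<Longrightarrow> R x \<in> S"
  unfolding rot_def by (simp add: orthogonal_transformation_norm)

lemma rot_meas: assumes "rot R" shows "R \<in> measurable \<sigma> \<sigma>"
proof -
  have l: "linear R" using assms unfolding rot_def by (simp add: orthogonal_transformation_linear)
  have "R \<in> borel_measurable borel" using l
    by (intro borel_measurable_continuous_onI linear_continuous_on linear_conv_bounded_linear[THEN iffD1]) 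
  then have "R \<in> measurable (restrict_space borel S) (restrict_space borel S)"
    by (rule measurable_restrict_space3) (use rot_S[OF assms] in auto)
  then show ?thesis using measurable_cong_sets[OF setsS setsS] by blast
qed

lemma distr_rot: assumes "rot R" shows "distr \<sigma> \<sigma> R = \<sigma>"
proof (rule measure_eqI)
  show "sets (distr \<sigma> \<sigma> R) = sets \<sigma>" by simp
  fix A assume "A \<in> sets (distr \<sigma> \<sigma> R)"
  then have A: "A \<in> sets \<sigma>" by simp
  show "emeasure (distr \<sigma> \<sigma> R) A = emeasure \<sigma> A"
    using emeasure_distr[OF rot_meas[OF assms] A] inv[OF assms A] by simp
qed

lemma integral_rot: fixes h :: "real^'n \<Rightarrow> real" assumes "rot R" "continuous_on S h"
  shows "(\<integral>x. h (R x) \<partial>\<sigma>) = (\<integral>x. h x \<partial>\<sigma>)"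
  using integral_distr[OF rot_meas[OF assms(1)] meas[OF assms(2)]] distr_rot[OF assms(1)] by simp

lemma rot_exists: assumes "CARD('n) \<ge> 2" "z \<in> S" "y \<in> S" shows "\<exists>R. rot R \<and> R z = y"
  using rotation_exists[of z y] assms unfolding rot_def by auto

lemma full_support: assumes n2: "CARD('n) \<ge> 2" and y: "y \<in> S" and e: "\<epsilon> > 0"
  shows "emeasure \<sigma> (ball y \<epsilon> \<inter> S) \<noteq> 0"
proof
  assume B0: "emeasure \<sigma> (ball y \<epsilon> \<inter> S) = 0"
  define B where "B = ball y \<epsilon> \<inter> S"
  have Bs: "B \<in> sets \<sigma>" unfolding setsS sets_restrict_space B_def by auto
  have "\<forall>z\<in>S. \<exists>R. rot R \<and> R z = y" using rot_exists[OF n2 _ y] by blast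
  then obtain Rf where Rf: "\<And>z. z \<in> S \<Longrightarrow> rot (Rf z) \<and> Rf z z = y" by metis
  have opn: "open (Rf z -` ball y \<epsilon>)" if "z \<in> S" for z
  proof -
    have "linear (Rf z)" using Rf[OF that] unfolding rot_def by (simp add: orthogonal_transformation_linear)
    then have "continuous_on UNIV (Rf z)" by (intro linear_continuous_on linear_conv_bounded_linear[THEN iffD1])
    then show ?thesis by (intro open_vimage) auto
  qed
  have cov: "S \<subseteq> (\<Union>z\<in>S. Rf z -` ball y \<epsilon>)" using Rf e by auto
  obtain D where D: "D \<subseteq> S" "finite D" "S \<subseteq> (\<Union>z\<in>D. Rf z -` ball y \<epsilon>)"
    using compactE_image[OF compact_sphere opn cov] by metis
  have "S \<subseteq> (\<Union>z\<in>D. Rf z -` B \<inter> space \<sigma>)"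
  proof
    fix x assume x: "x \<in> S"
    then obtain z where z: "z \<in> D" "Rf z x \<in> ball y \<epsilon>" using D(3) by blast
    have "rot (Rf z)" using Rf z(1) D(1) by blast
    then have "Rf z x \<in> S" using rot_S x by blast
    then have "x \<in> Rf z -` B \<inter> space \<sigma>" using z(2) x spS unfolding B_def by simp
    then show "x \<in> (\<Union>z\<in>D. Rf z -` B \<inter> space \<sigma>)" using z(1) by blast
  qed
  moreover have mz: "Rf z -` B \<inter> space \<sigma> \<in> sets \<sigma>" if "z \<in> D" for z
    using measurable_sets[OF rot_meas[of "Rf z"] Bs] Rf that D(1) by blast
  ultimately have "emeasure \<sigma> S \<le> emeasure \<sigma> (\<Union>z\<in>D. Rf z -` B \<inter> space \<sigma>)"
    by (intro emeasure_mono sets.finite_UN D(2)) auto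
  also have "\<dots> \<le> (\<Sum>z\<in>D. emeasure \<sigma> (Rf z -` B \<inter> space \<sigma>))"
    by (intro emeasure_subadditive_finite D(2)) (use mz in auto)
  also have "\<dots> = (\<Sum>z\<in>D. emeasure \<sigma> B)"
    by (intro sum.cong refl inv Bs) (use Rf D(1) in auto)
  also have "\<dots> = 0" using B0 B_def by simp
  finally have "emeasure \<sigma> S = 0" by simp
  moreover have "emeasure \<sigma> S = 1" using prob_space.emeasure_space_1[OF ps] spS by simp
  ultimately show False by simp
qed

lemma posdef: fixes h :: "real^'n \<Rightarrow> real" assumes n2: "CARD('n) \<ge> 2" and h: "continuous_on S h" and z: "(\<integral>x. (h x)^2 \<partial>\<sigma>) = 0"
  shows "\<forall>x\<in>S. h x = 0"
proof (rule ccontr)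
  assume "\<not> (\<forall>x\<in>S. h x = 0)"
  then obtain y where y: "y \<in> S" "h y \<noteq> 0" by auto
  have ci: "continuous_on S (\<lambda>x. (h x)^2)" by (rule continuous_on_power[OF h])
  have "AE x in \<sigma>. (h x)^2 = 0"
    using integral_nonneg_eq_0_iff_AE[OF integ[OF ci]] z by simp
  then obtain N where N: "{x \<in> space \<sigma>. \<not> h x = 0} \<subseteq> N" "emeasure \<sigma> N = 0" "N \<in> sets \<sigma>" by (auto elim: AE_E)
  obtain \<epsilon> where e: "\<epsilon> > 0" "\<forall>x\<in>S. dist x y < \<epsilon> \<longrightarrow> dist (h x) (h y) < \<bar>h y\<bar>"
    using h y unfolding continuous_on_iff by (metis zero_less_abs_iff)
  have "ball y \<epsilon> \<inter> S \<subseteq> N"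
  proof
    fix x assume x: "x \<in> ball y \<epsilon> \<inter> S"
    then have "h x \<noteq> 0" using e by (auto simp: dist_commute dist_real_def)
    then show "x \<in> N" using N(1) x spS by auto
  qed
  then have "emeasure \<sigma> (ball y \<epsilon> \<inter> S) = 0"
    using N(2,3) by (metis emeasure_eq_0)
  then show False using full_support[OF n2 y(1) e(1)] by simp
qed

end



context rsp begin

definition ip :: "(real^'n \<Rightarrow> real) \<Rightarrow> (real^'n \<Rightarrow> real) \<Rightarrow> real" where
  "ip f g = (\<integral>x. f x * g x \<partial>\<sigma>)"

lemma ip_comm: "ip f g = ip g f"
  unfolding ip_def by (simp add: mult.commute)

lemma ip_scale_left: "ip (\<lambda>x. r * f x) g = r * ip f g"
  unfolding ip_def by (simp add: mult.assoc)

lemma ip_div_left: "ip (\<lambda>x. f x / r) g = ip f g / r"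
proof -
  have "ip (\<lambda>x. f x / r) g = (\<integral>x. f x * g x / r \<partial>\<sigma>)" unfolding ip_def by (simp add: field_simps)
  also have "\<dots> = ip f g / r" unfolding ip_def by (rule integral_divide_zero)
  finally show ?thesis .
qed

lemma ip_cong: "(\<And>x. x \<in> S \<Longrightarrow> f x = f' x) \<Longrightarrow> ip f g = ip f' g"
  unfolding ip_def by (rule Bochner_Integration.integral_cong) (auto simp: spS)

lemma ip_sum_left:
  assumes "finite I" "\<And>i. i \<in> I \<Longrightarrow> continuous_on S (f i)" "continuous_on S g"
  shows "ip (\<lambda>x. \<Sum>i\<in>I. a i * f i x) g = (\<Sum>i\<in>I. a i * ip (f i) g)"
proof -
  have "ip (\<lambda>x. \<Sum>i\<in>I. a i * f i x) g = (\<integral>x. (\<Sum>i\<in>I. a i * (f i x * g x)) \<partial>\<sigma>)"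
    unfolding ip_def by (simp add: sum_distrib_right mult.assoc)
  also have "\<dots> = (\<Sum>i\<in>I. (\<integral>x. a i * (f i x * g x) \<partial>\<sigma>))"
    by (rule Bochner_Integration.integral_sum) (intro integ continuous_intros assms; simp)
  also have "\<dots> = (\<Sum>i\<in>I. a i * ip (f i) g)" unfolding ip_def by simp
  finally show ?thesis .
qed

lemma ip_diff_left:
  assumes "continuous_on S f" "continuous_on S h" "continuous_on S g"
  shows "ip (\<lambda>x. f x - h x) g = ip f g - ip h g"
proof -
  have "ip (\<lambda>x. f x - h x) g = (\<integral>x. f x * g x - h x * g x \<partial>\<sigma>)"
    unfolding ip_def by (simp add: algebra_simps)
  also have "\<dots> = ip f g - ip h g" unfolding ip_def
    by (rule Bochner_Integration.integral_diff) (intro integ continuous_intros assms)+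
  finally show ?thesis .
qed

lemma ip_nonneg: "continuous_on S f \<Longrightarrow> ip f f \<ge> 0"
  unfolding ip_def by (rule integral_nonneg_AE) auto

lemma form_minus_sum:
  fixes m :: nat
  assumes "is_form d u" "\<And>i. i < m \<Longrightarrow> is_form d (e i)"
  shows "is_form d (\<lambda>x. u x - (\<Sum>i<m. c i * e i x))"
proof -
  have "is_form d (\<lambda>x. u x + (-1) * (\<Sum>i<m. c i * e i x))"
    by (rule form_add[OF assms(1)], rule form_scale, rule form_sum) (auto intro: form_scale assms(2))
  then show ?thesis by simp
qed

lemma GS:
  assumes n2: "CARD('n) \<ge> 2" and fA: "finite A" and uA: "\<And>\<alpha>. \<alpha> \<in> A \<Longrightarrow> is_form d (u \<alpha>)"
  shows "\<exists>m e. m \<le> card A \<and> (\<forall>i<m. is_form d (e i)) \<and>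
     (\<forall>i<m. \<forall>j<m. ip (e i) (e j) = (if i = j then 1 else 0)) \<and>
     (\<forall>\<alpha>\<in>A. \<exists>a. \<forall>x\<in>S. u \<alpha> x = (\<Sum>i<m. a i * e i x))"
  using fA uA
proof (induction A rule: finite_induct)
  case empty
  show ?case by (intro exI[of _ 0]) simp
next
  case (insert \<alpha> F)
  then obtain m e where m: "m \<le> card F" and eP: "\<forall>i<m. is_form d (e i)"
    and on: "\<forall>i<m. \<forall>j<m. ip (e i) (e j) = (if i = j then 1 else 0)"
    and ex: "\<forall>\<beta>\<in>F. \<exists>a. \<forall>x\<in>S. u \<beta> x = (\<Sum>i<m. a i * e i x)" by auto
  have ec: "continuous_on S (e i)" if "i < m" for i using eP that form_continuous by blast
  have uc: "continuous_on S (u \<alpha>)" using insert.prems form_continuous by blast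
  define c where "c i = ip (u \<alpha>) (e i)" for i
  define w where "w x = u \<alpha> x - (\<Sum>i<m. c i * e i x)" for x
  have wP: "is_form d w" unfolding w_def by (intro form_minus_sum) (use insert.prems eP in auto)
  have wc: "continuous_on S w" using wP form_continuous by blast
  have sc: "continuous_on S (\<lambda>x. \<Sum>i<m. c i * e i x)" by (intro continuous_intros ec) auto
  have wo: "ip w (e j) = 0" if j: "j < m" for j
  proof -
    have "ip w (e j) = ip (u \<alpha>) (e j) - ip (\<lambda>x. \<Sum>i<m. c i * e i x) (e j)"
      unfolding w_def by (rule ip_diff_left[OF uc sc ec[OF j]])
    also have "ip (\<lambda>x. \<Sum>i<m. c i * e i x) (e j) = (\<Sum>i<m. c i * ip (e i) (e j))"
      by (rule ip_sum_left) (use ec j in auto)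
    also have "\<dots> = (\<Sum>i<m. if i = j then c i else 0)"
      by (intro sum.cong refl) (use on j in auto)
    also have "\<dots> = c j" using j by simp
    finally show ?thesis unfolding c_def by simp
  qed
  have card_ins: "card (insert \<alpha> F) = card F + 1" using insert by simp
  show ?case
  proof (cases "ip w w = 0")
    case True
    then have w0: "\<forall>x\<in>S. w x = 0"
      using posdef[OF n2 wc] unfolding ip_def by (simp add: power2_eq_square)
    show ?thesis
    proof (intro exI[of _ m] exI[of _ e] conjI)
      show "m \<le> card (insert \<alpha> F)" using m card_ins by simp
      show "\<forall>\<beta>\<in>insert \<alpha> F. \<exists>a. \<forall>x\<in>S. u \<beta> x = (\<Sum>i<m. a i * e i x)"
      proof
        fix \<beta> assume "\<beta> \<in> insert \<alpha> F"
        then consider "\<beta> = \<alpha>" | "\<beta> \<in> F" by auto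
        then show "\<exists>a. \<forall>x\<in>S. u \<beta> x = (\<Sum>i<m. a i * e i x)"
        proof cases
          case 1 then show ?thesis using w0 unfolding w_def by (intro exI[of _ c]) auto
        next
          case 2 then show ?thesis using ex by auto
        qed
      qed
    qed (use eP on in auto)
  next
    case False
    have q: "ip w w > 0" using False ip_nonneg[OF wc] by simp
    define r where "r = sqrt (ip w w)"
    have r: "r > 0" "r * r = ip w w" using q unfolding r_def by (auto simp: real_sqrt_mult_self)
    define e' where "e' = e(m := (\<lambda>x. w x / r))"
    have e'P: "\<forall>i<Suc m. is_form d (e' i)"
    proof -
      have "is_form d (\<lambda>x. w x / r)" using form_scale[OF wP, of "1/r"] by simp
      then show ?thesis unfolding e'_def using eP by (auto simp: less_Suc_eq)
    qed
    have e'm: "ip (e' m) (e j) = 0" if "j < m" for j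
      unfolding e'_def using wo[OF that] by (simp add: ip_div_left)
    have e'mm: "ip (e' m) (e' m) = 1"
    proof -
      have "ip (e' m) (e' m) = ip (\<lambda>x. w x / r) (\<lambda>x. w x / r)" unfolding e'_def by simp
      also have "\<dots> = ip w (\<lambda>x. w x / r) / r" by (rule ip_div_left)
      also have "ip w (\<lambda>x. w x / r) = ip (\<lambda>x. w x / r) w" by (rule ip_comm)
      also have "\<dots> = ip w w / r" by (rule ip_div_left)
      finally have "ip (e' m) (e' m) = ip w w / r / r" .
      then show ?thesis using r q by (simp add: field_simps)
    qed
    show ?thesis
    proof (intro exI[of _ "Suc m"] exI[of _ e'] conjI)
      show "Suc m \<le> card (insert \<alpha> F)" using m card_ins by simp
      show "\<forall>i<Suc m. is_form d (e' i)" by (rule e'P)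
      show "\<forall>i<Suc m. \<forall>j<Suc m. ip (e' i) (e' j) = (if i = j then 1 else 0)"
      proof (intro allI impI)
        fix i j assume i: "i < Suc m" and j: "j < Suc m"
        show "ip (e' i) (e' j) = (if i = j then 1 else 0)"
        proof (cases "i = m")
          case True
          then show ?thesis
          proof (cases "j = m")
            case True then show ?thesis using \<open>i = m\<close> e'mm by simp
          next
            case False then have "j < m" using j by simp
            then show ?thesis using \<open>i = m\<close> e'm by (simp add: e'_def)
          qed
        next
          case False then have im: "i < m" using i by simp
          show ?thesis
          proof (cases "j = m")
            case True then show ?thesis using im e'm[OF im] ip_comm[of "e i" "e' m"] by (simp add: e'_def)
          next
            case False then have "j < m" using j by simp
            then show ?thesis using im on \<open>i \<noteq> m\<close> \<open>j \<noteq> m\<close> by (simp add: e'_def)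
          qed
        qed
      qed
      show "\<forall>\<beta>\<in>insert \<alpha> F. \<exists>a. \<forall>x\<in>S. u \<beta> x = (\<Sum>i<Suc m. a i * e' i x)"
      proof
        fix \<beta> assume "\<beta> \<in> insert \<alpha> F"
        then consider "\<beta> = \<alpha>" | "\<beta> \<in> F" by auto
        then show "\<exists>a. \<forall>x\<in>S. u \<beta> x = (\<Sum>i<Suc m. a i * e' i x)"
        proof cases
          case 1
          have "u \<alpha> x = (\<Sum>i<Suc m. (c(m := r)) i * e' i x)" for x
          proof -
            have "(\<Sum>i<m. (c(m := r)) i * e' i x) = (\<Sum>i<m. c i * e i x)"
              by (intro sum.cong refl) (auto simp: e'_def)
            moreover have "r * e' m x = w x" using r by (simp add: e'_def)
            ultimately show ?thesis by (simp add: w_def)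
          qed
          then show ?thesis using 1 by blast
        next
          case 2
          then obtain a where a: "\<forall>x\<in>S. u \<beta> x = (\<Sum>i<m. a i * e i x)" using ex by auto
          have "u \<beta> x = (\<Sum>i<Suc m. (a(m := 0)) i * e' i x)" if "x \<in> S" for x
          proof -
            have "(\<Sum>i<m. (a(m := 0)) i * e' i x) = (\<Sum>i<m. a i * e i x)"
              by (intro sum.cong refl) (auto simp: e'_def)
            then show ?thesis using a that by simp
          qed
          then show ?thesis by blast
        qed
      qed
    qed
  qed
qed

end



context rsp begin

lemma main_bound:
  assumes n2: "CARD('n) \<ge> 2" and g: "is_form d g" and x0: "x0 \<in> S"
  shows "(g x0)^2 \<le> real (card (Aset d :: ('n \<Rightarrow> nat) set)) * ip g g"
proof -
  obtain m e where m: "m \<le> card (Aset d :: ('n \<Rightarrow> nat) set)" and eP: "\<forall>i<m. is_form d (e i)"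
    and on: "\<forall>i<m. \<forall>j<m. ip (e i) (e j) = (if i = j then 1 else 0)"
    and ex: "\<forall>\<alpha>\<in>Aset d. \<exists>a. \<forall>x\<in>S. mono_n \<alpha> x = (\<Sum>i<m. a i * e i x)"
    using GS[where u="mono_n" and d=d and A="Aset d", OF n2 finite_Aset] form_mono by blast
  have ec: "continuous_on S (e i)" if "i < m" for i using eP that form_continuous by blast
  define K where "K x = (\<Sum>i<m. (e i x)^2)" for x
  have Kc: "continuous_on S K" unfolding K_def by (intro continuous_intros ec) auto
  have K0: "K x \<ge> 0" for x unfolding K_def by (intro sum_nonneg) auto
  have expand: "\<exists>a. \<forall>x\<in>S. h x = (\<Sum>i<m. a i * e i x)" if h: "is_form d h" for h
  proof -
    obtain c where c: "h = (\<lambda>x. \<Sum>\<alpha>\<in>Aset d. c \<alpha> * mono_n \<alpha> x)" using h is_form_alt by blast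
    obtain af where af: "\<forall>\<alpha>\<in>Aset d. \<forall>x\<in>S. mono_n \<alpha> x = (\<Sum>i<m. af \<alpha> i * e i x)"
      using bchoice[OF ex] by blast
    define a where "a i = (\<Sum>\<alpha>\<in>Aset d. c \<alpha> * af \<alpha> i)" for i
    have "h x = (\<Sum>i<m. a i * e i x)" if x: "x \<in> S" for x
    proof -
      have "h x = (\<Sum>\<alpha>\<in>Aset d. c \<alpha> * mono_n \<alpha> x)" using c by simp
      also have "\<dots> = (\<Sum>\<alpha>\<in>Aset d. c \<alpha> * (\<Sum>i<m. af \<alpha> i * e i x))"
        using af x by (intro sum.cong refl) simp
      also have "\<dots> = (\<Sum>\<alpha>\<in>Aset d. \<Sum>i<m. c \<alpha> * af \<alpha> i * e i x)"
        by (simp add: sum_distrib_left mult.assoc)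
      also have "\<dots> = (\<Sum>i<m. \<Sum>\<alpha>\<in>Aset d. c \<alpha> * af \<alpha> i * e i x)" by (rule sum.swap)
      also have "\<dots> = (\<Sum>i<m. a i * e i x)"
        unfolding a_def by (simp add: sum_distrib_right)
      finally show ?thesis .
    qed
    then show ?thesis by blast
  qed
  have ipexp: "ip h h = (\<Sum>i<m. (a i)^2)"
    if hc: "continuous_on S h" and ha: "\<forall>x\<in>S. h x = (\<Sum>i<m. a i * e i x)" for h a
  proof -
    have sc: "continuous_on S (\<lambda>x. \<Sum>i<m. a i * e i x)" by (intro continuous_intros ec) auto
    have "ip (e j) h = a j" if j: "j < m" for j
    proof -
      have "ip (e j) h = ip h (e j)" by (rule ip_comm)
      also have "\<dots> = ip (\<lambda>x. \<Sum>i<m. a i * e i x) (e j)" by (rule ip_cong) (use ha in auto)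
      also have "\<dots> = (\<Sum>i<m. a i * ip (e i) (e j))" by (rule ip_sum_left) (use ec j in auto)
      also have "\<dots> = (\<Sum>i<m. if i = j then a i else 0)" by (intro sum.cong refl) (use on j in auto)
      also have "\<dots> = a j" using j by simp
      finally show ?thesis .
    qed
    have "ip h h = ip (\<lambda>x. \<Sum>i<m. a i * e i x) h" by (rule ip_cong) (use ha in auto)
    also have "\<dots> = (\<Sum>i<m. a i * ip (e i) h)" by (rule ip_sum_left) (use ec hc in auto)
    also have "\<dots> = (\<Sum>i<m. (a i)^2)" by (intro sum.cong refl) (auto simp: power2_eq_square \<open>\<And>j. j < m \<Longrightarrow> ip (e j) h = a j\<close>)
    finally show ?thesis .
  qed
  have CS: "(h x)^2 \<le> ip h h * K x"
    if h: "is_form d h" and x: "x \<in> S" for h x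
  proof -
    obtain a where a: "\<forall>x\<in>S. h x = (\<Sum>i<m. a i * e i x)" using expand[OF h] by blast
    have "ip h h = (\<Sum>i<m. (a i)^2)" by (rule ipexp[OF form_continuous[OF h] a])
    moreover have "(h x)^2 = (\<Sum>i<m. a i * e i x)^2" using a x by simp
    ultimately show ?thesis unfolding K_def using Cauchy_Schwarz_ineq_sum[of a "\<lambda>i. e i x" "{..<m}"] by simp
  qed
  have intK: "(\<integral>x. K x \<partial>\<sigma>) = real m"
  proof -
    have "(\<integral>x. K x \<partial>\<sigma>) = (\<Sum>i<m. (\<integral>x. (e i x)^2 \<partial>\<sigma>))"
      unfolding K_def by (rule Bochner_Integration.integral_sum) (intro integ continuous_intros ec; simp)
    also have "\<dots> = (\<Sum>i<m. ip (e i) (e i))" unfolding ip_def by (simp add: power2_eq_square)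
    also have "\<dots> = (\<Sum>i<m. 1)" using on by (intro sum.cong refl) auto
    finally show ?thesis by simp
  qed
  have Sne: "S \<noteq> {}" using x0 by blast
  obtain y where y: "y \<in> S" "\<forall>z\<in>S. K y \<le> K z" using continuous_attains_inf[OF compact_sphere Sne Kc] by blast
  have Ky: "K y \<le> real m"
  proof -
    have ms: "measure \<sigma> (space \<sigma>) = 1" using prob_space.prob_space[OF ps] by simp
    have "(\<integral>x. K y \<partial>\<sigma>) \<le> (\<integral>x. K x \<partial>\<sigma>)"
      by (rule Bochner_Integration.integral_mono) (use integ[OF Kc] integ[OF continuous_on_const] y spS in auto)
    moreover have "(\<integral>x. K y \<partial>\<sigma>) = K y" using ms by simp
    ultimately show ?thesis using intK by linarith
  qed
  define hs where "hs z = (\<Sum>i<m. e i x0 * e i z)" for z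
  have hsP: "is_form d hs" unfolding hs_def
    by (intro form_sum form_scale) (use eP in auto)
  have hsx0: "hs x0 = K x0" unfolding hs_def K_def by (simp add: power2_eq_square)
  have iphs: "ip hs hs = K x0"
    unfolding K_def by (rule ipexp[OF form_continuous[OF hsP]]) (simp add: hs_def)
  obtain R where R: "rot R" "R y = x0" using rot_exists[OF n2 y(1) x0] by blast
  have lR: "linear R" using R(1) unfolding rot_def by (simp add: orthogonal_transformation_linear)
  define hR where "hR z = hs (R z)" for z
  have hRP: "is_form d hR" unfolding hR_def by (rule form_comp[OF hsP lR])
  have iphR: "ip hR hR = K x0"
  proof -
    have "ip hR hR = (\<integral>z. hs (R z) * hs (R z) \<partial>\<sigma>)" unfolding ip_def hR_def by simp
    also have "\<dots> = (\<integral>z. hs z * hs z \<partial>\<sigma>)"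
      using integral_rot[OF R(1), of "\<lambda>z. hs z * hs z"] form_continuous[OF hsP]
      by (simp add: continuous_on_mult)
    finally show ?thesis using iphs unfolding ip_def by simp
  qed
  have "(hR y)^2 \<le> ip hR hR * K y" by (rule CS[OF hRP y(1)])
  then have "(K x0)^2 \<le> K x0 * K y" using iphR hsx0 R(2) unfolding hR_def by simp
  then have Kx0: "K x0 \<le> K y"
    using K0[of x0] by (cases "K x0 = 0") (auto simp: power2_eq_square intro: K0)
  have "(g x0)^2 \<le> ip g g * K x0" by (rule CS[OF g x0])
  also have "\<dots> \<le> ip g g * real (card (Aset d :: ('n \<Rightarrow> nat) set))"
    using Kx0 Ky m ip_nonneg[OF form_continuous[OF g]]
    by (intro mult_left_mono) auto
  finally show ?thesis by (simp add: mult.commute)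
qed

end



theorem corollary6p7:
  fixes f :: "real^'n \<Rightarrow> real" and \<sigma> :: "(real^'n) measure" and k l :: nat
  assumes "CARD('n) \<ge> 2" and "k \<ge> 1" and "l \<ge> 1"
    and "is_form k f" and "rot_inv_sphere_prob \<sigma>"
  shows "(SUP x\<in>sphere 0 1. \<bar>f x\<bar>)
    \<le> (real ((CARD('n) + k * l - 1) choose (k * l))) powr (1 / (2 * real l))
       * (\<integral>x. \<bar>f x\<bar> ^ (2 * l) \<partial>\<sigma>) powr (1 / (2 * real l))"
proof -
  interpret rsp \<sigma> using assms(5) by unfold_locales
  define N where "N = real ((CARD('n) + k * l - 1) choose (k * l))"
  define I where "I = (\<integral>x. \<bar>f x\<bar> ^ (2 * l) \<partial>\<sigma>)"
  define g where "g x = f x ^ l" for x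
  have gP: "is_form (k * l) g" unfolding g_def by (rule form_power[OF assms(4)])
  have ipg: "ip g g = I" unfolding ip_def I_def g_def
    by (intro Bochner_Integration.integral_cong refl) (simp add: power_mult power2_eq_square[symmetric] power_mult_distrib[symmetric] mult.commute, metis power2_abs power_abs)
  have N0: "N \<ge> 0" unfolding N_def by simp
  have I0: "I \<ge> 0" unfolding I_def by (rule integral_nonneg_AE) auto
  have pos: "0 < 2 * real l" using assms(3) by simp
  have bound: "\<bar>f x\<bar> \<le> N powr (1 / (2 * real l)) * I powr (1 / (2 * real l))" if x: "x \<in> S" for x
  proof (cases "f x = 0")
    case True then show ?thesis using N0 I0 by simp
  next
    case False
    have c: "real (card (Aset (k*l) :: ('n\<Rightarrow>nat) set)) = N" unfolding N_def card_Aset ..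
    have gx: "(g x)^2 = \<bar>f x\<bar> ^ (2 * l)"
    proof -
      have "(g x)^2 = f x ^ (l * 2)" unfolding g_def by (rule power_mult[symmetric])
      also have "\<dots> = f x ^ (2 * l)" by (simp only: mult.commute)
      also have "\<dots> = \<bar>f x\<bar> ^ (2 * l)" by (rule power_even_abs[symmetric]) simp
      finally show ?thesis .
    qed
    have le: "\<bar>f x\<bar> ^ (2 * l) \<le> N * I"
      using main_bound[OF assms(1) gP x] unfolding c gx ipg .
    have ax: "\<bar>f x\<bar> > 0" using False by simp
    have "\<bar>f x\<bar> = (\<bar>f x\<bar> ^ (2 * l)) powr (1 / (2 * real l))"
    proof -
      have "\<bar>f x\<bar> ^ (2 * l) = \<bar>f x\<bar> powr (real (2 * l))" by (rule powr_realpow[OF ax, symmetric])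
      then have "(\<bar>f x\<bar> ^ (2 * l)) powr (1 / (2 * real l)) = \<bar>f x\<bar> powr (real (2 * l) * (1 / (2 * real l)))"
        by (simp add: powr_powr)
      also have "\<dots> = \<bar>f x\<bar>" using pos by simp
      finally show ?thesis by simp
    qed
    also have "\<dots> \<le> (N * I) powr (1 / (2 * real l))"
      by (rule powr_mono2) (use le pos in auto)
    also have "\<dots> = N powr (1 / (2 * real l)) * I powr (1 / (2 * real l))"
      using N0 I0 by (simp add: powr_mult)
    finally show ?thesis .
  qed
  have "S \<noteq> {}" by simp
  then have "(SUP x\<in>S. \<bar>f x\<bar>) \<le> N powr (1 / (2 * real l)) * I powr (1 / (2 * real l))"
    by (rule cSUP_least) (rule bound)
  then show ?thesis unfolding N_def I_def .
qed


end
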